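(* Let $q$ be a prime power, let $V = V(4,q)$ be the $4$-dimensional vector space over $\mathrm{GF}(q)$, and let $X$ be the set of $2$-dimensional subspaces (lines) of $V$, so $|X| = (q^2+1)(q^2+q+1)$. Let $Y \subseteq X$ be such that its characteristic function $f_Y$ has degree at most $1$, and write $|Y| = x(q^2+q+1)$ (with $x$ a real number; in fact an integer). Then for every $1$-dimensional subspace $P$ and every $3$-dimensional subspace $H$ of $V$ with $P \subseteq H$, $$x = |\{ L \in Y : P \subseteq L\}| + |\{ L \in Y : L \subseteq H\}| - (q+1)\,|\{L \in Y : P \subseteq L \subseteq H\}|.$$
   Context: For a $1$-dimensional subspace $P$ of $V$, let $x_P\colon X \to \{0,1\}$ be defined by $x_P(L) = 1$ if $P \subseteq L$ and $x_P(L) = 0$ otherwise. A function $f\colon X \to \mathbb{R}$ has degree at most $1$ if it can be written as $f = c + \sum_P c_P x_P$ (sum over all $1$-dimensional subspaces $P$ of $V$) for real constants $c, c_P$. The characteristic function $f_Y$ of $Y \subseteq X$ takes value $1$ on $Y$ and $0$ elsewhere. (Equivalently, $\deg f \le 1$ means $f$ lies in the sum of the first two eigenspaces $V_0 + V_1$ of the Grassmann scheme $J_q(4,2)$ in its standard cometric (Q-polynomial) ordering.) *)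

theory Defs
  imports "HOL-Analysis.Analysis"
begin

text \<open>V = V(4,q) is modelled as the coordinate space 'a^4 over a finite field 'a
(q = CARD('a)); subspaces and dimension are those of the library interpretation
vec : vector_space (*s).\<close>

definition subspaces_of_dim :: "nat \<Rightarrow> (('a::field)^4) set set" where
  "subspaces_of_dim k = {S. vec.subspace S \<and> vec.dim S = k}"

abbreviation points :: "(('a::field)^4) set set" where
  "points \<equiv> subspaces_of_dim 1"

abbreviation lines :: "(('a::field)^4) set set" where
  "lines \<equiv> subspaces_of_dim 2"

abbreviation planes :: "(('a::field)^4) set set" where
  "planes \<equiv> subspaces_of_dim 3"

definition xP :: "(('a::field)^4) set \<Rightarrow> (('a::field)^4) set \<Rightarrow> real" where
  "xP P L = (if P \<subseteq> L then 1 else 0)"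

definition degree_le_1 :: "((('a::{field,finite})^4) set \<Rightarrow> real) \<Rightarrow> bool" where
  "degree_le_1 f \<longleftrightarrow> (\<exists>(c::real) (cP :: ('a^4) set \<Rightarrow> real).
      \<forall>L \<in> lines. f L = c + (\<Sum>P\<in>points. cP P * xP P L))"

definition char_fun :: "(('a::field)^4) set set \<Rightarrow> ('a^4) set \<Rightarrow> real" where
  "char_fun Y L = (if L \<in> Y then 1 else 0)"

end

theory Submission imports Defs begin

lemma card_span_indep:
  fixes B :: "('a::{field,finite}^'n) set"
  assumes "vec.independent B"
  shows "card (vec.span B) = CARD('a) ^ card B"
proof -
  have "finite B" by simp
  then show ?thesis using assms
  proof (induction B rule: finite_induct)
    case empty then show ?case by simp
  next
    case (insert b B)
    have ind: "vec.independent B" and nb: "b \<notin> vec.span B"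
      using insert.prems insert.hyps by (auto simp: vec.independent_insert)
    let ?g = "\<lambda>(a::'a,t). t + a *s b"
    have "vec.span (insert b B) = ?g ` (UNIV \<times> vec.span B)"
    proof (intro equalityI subsetI)
      fix x assume "x \<in> vec.span (insert b B)"
      then obtain k where k: "x - k *s b \<in> vec.span B" by (auto simp: vec.span_breakdown_eq)
      then show "x \<in> ?g ` (UNIV \<times> vec.span B)"
        by (intro image_eqI[of _ _ "(k, x - k *s b)"]) auto
    next
      fix x assume "x \<in> ?g ` (UNIV \<times> vec.span B)"
      then obtain a t where "x = t + a *s b" "t \<in> vec.span B" by auto
      then have "x - a *s b \<in> vec.span B" by simp
      then show "x \<in> vec.span (insert b B)"
        by (auto simp: vec.span_breakdown_eq)
    qed
    moreover have "inj_on ?g (UNIV \<times> vec.span B)"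
    proof (rule inj_onI, clarify)
      fix a t a' t' assume t: "t \<in> vec.span B" and t': "t' \<in> vec.span B"
        and eq: "t + a *s b = t' + a' *s b"
      have e2: "(a - a') *s b = t' - t" using eq
        by (simp add: algebra_simps vec.scale_left_diff_distrib)
      show "a = a' \<and> t = t'"
      proof (cases "a = a'")
        case True then show ?thesis using eq by simp
      next
        case False
        have "t' - t \<in> vec.span B" using t t' vec.span_diff by blast
        then have "inverse (a - a') *s ((a - a') *s b) \<in> vec.span B"
          using e2 vec.span_scale by metis
        moreover have "inverse (a - a') * (a - a') = 1" using False by simp
        ultimately have "b \<in> vec.span B" by (metis vec.scale_scale vec.scale_one)
        with nb show ?thesis by simp
      qed
    qed
    ultimately have "card (vec.span (insert b B)) = card ((UNIV::'a set) \<times> vec.span B)"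
      by (simp only: card_image)
    also have "\<dots> = CARD('a) * CARD('a) ^ card B" using insert.IH ind by (simp add: card_cartesian_product)
    finally show ?case using insert.hyps by simp
  qed
qed

lemma card_subspace:
  fixes S :: "('a::{field,finite}^'n) set"
  assumes "vec.subspace S"
  shows "card S = CARD('a) ^ vec.dim S"
proof -
  obtain B where B: "B \<subseteq> S" "vec.independent B" "S \<subseteq> vec.span B" "card B = vec.dim S"
    using vec.basis_exists[of S] by metis
  have "vec.span B = S" using vec.span_subspace[OF B(1) B(3) assms] .
  then show ?thesis using card_span_indep[OF B(2)] B(4) by simp
qed

lemma card_ge2: "CARD('a::{field,finite}) \<ge> 2"
proof -
  have "card {0::'a, 1} \<le> CARD('a)" by (rule card_mono) auto
  then show ?thesis by simp
qed

type_synonym 'a V4 = "('a::{field,finite})^4"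

lemma mem_sod: "S \<in> subspaces_of_dim k \<longleftrightarrow> vec.subspace S \<and> vec.dim S = k"
  by (simp add: subspaces_of_dim_def)

lemma span_single_point:
  fixes u :: "'a::{field,finite}^4"
  assumes "u \<noteq> 0" shows "vec.span {u} \<in> points"
  using assms by (simp add: mem_sod vec.subspace_span)

lemma point_span:
  fixes u :: "'a::{field,finite}^4"
  assumes "P \<in> points" "u \<in> P" "u \<noteq> 0"
  shows "vec.span {u} = P"
proof (rule vec.subspace_dim_equal)
  show "vec.subspace (vec.span {u})" by (rule vec.subspace_span)
  show "vec.subspace P" using assms by (simp add: mem_sod)
  show "vec.span {u} \<subseteq> P" using assms by (intro vec.span_minimal) (auto simp: mem_sod)
  show "vec.dim P \<le> vec.dim (vec.span {u})" using assms by (simp add: mem_sod)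
qed

lemma card_sod:
  fixes S :: "('a::{field,finite}^4) set"
  assumes "S \<in> subspaces_of_dim k" shows "card S = CARD('a) ^ k"
  using assms card_subspace by (auto simp: mem_sod)

lemma indep_pair:
  fixes u v :: "'a::{field,finite}^4"
  assumes "u \<noteq> 0" "v \<notin> vec.span {u}"
  shows "vec.independent {v, u}" "v \<noteq> u"
proof -
  show "v \<noteq> u" using assms vec.span_base by blast
  then show "vec.independent {v, u}" using assms by (simp add: vec.independent_insert)
qed

lemma pair_is_line:
  fixes u v :: "'a::{field,finite}^4"
  assumes "u \<noteq> 0" "v \<notin> vec.span {u}"
  shows "vec.span {u, v} \<in> lines"
proof -
  have "vec.dim (vec.span {v, u}) = card {v, u}"
    using indep_pair[OF assms] vec.dim_span_eq_card_independent by blast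
  then have "vec.dim (vec.span {u, v}) = 2" using indep_pair[OF assms]
    by (simp add: insert_commute)
  then show ?thesis by (simp add: mem_sod vec.subspace_span)
qed

lemma pair_line:
  fixes u v :: "'a::{field,finite}^4"
  assumes "u \<noteq> 0" "v \<notin> vec.span {u}" "L \<in> lines" "u \<in> L" "v \<in> L"
  shows "vec.span {u, v} = L"
proof (rule vec.subspace_dim_equal)
  show "vec.subspace (vec.span {u, v})" by (rule vec.subspace_span)
  show "vec.subspace L" using assms by (simp add: mem_sod)
  show "vec.span {u, v} \<subseteq> L" using assms by (intro vec.span_minimal) (auto simp: mem_sod)
  show "vec.dim L \<le> vec.dim (vec.span {u, v})"
    using pair_is_line[OF assms(1,2)] assms(3) by (simp add: mem_sod)
qed

lemma double_count:
  fixes g :: "'p \<Rightarrow> 'l"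
  assumes "finite PP" "finite Ls" "\<forall>p\<in>PP. g p \<in> Ls"
    "\<forall>L\<in>Ls. card {p\<in>PP. g p = L} = k"
  shows "card PP = card Ls * k"
proof -
  have "PP = (\<Union>L\<in>Ls. {p\<in>PP. g p = L})" using assms(3) by auto
  moreover have "card (\<Union>L\<in>Ls. {p\<in>PP. g p = L}) = (\<Sum>L\<in>Ls. card {p\<in>PP. g p = L})"
    using assms(1,2) by (intro card_UN_disjoint) auto
  ultimately have "card PP = (\<Sum>L\<in>Ls. card {p\<in>PP. g p = L})" by simp
  also have "\<dots> = card Ls * k" using assms(4) by simp
  finally show ?thesis .
qed

lemma card_span1:
  fixes u :: "'a::{field,finite}^4"
  assumes "u \<noteq> 0" shows "card (vec.span {u}) = CARD('a)"
  using card_span_indep[of "{u}"] assms by simp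

definition Sig :: "('a::{field,finite}^4) set \<Rightarrow> (('a^4) \<times> ('a^4)) set" where
  "Sig W = (SIGMA u:(W-{0}). W - vec.span {u})"

lemma card_Sig:
  fixes W :: "('a::{field,finite}^4) set"
  assumes "vec.subspace W"
  shows "card (Sig W) = (CARD('a) ^ vec.dim W - 1) * (CARD('a) ^ vec.dim W - CARD('a))"
proof -
  have "\<forall>u\<in>W-{0}. card (W - vec.span {u}) = CARD('a) ^ vec.dim W - CARD('a)"
  proof
    fix u assume u: "u \<in> W - {0}"
    have "vec.span {u} \<subseteq> W" using u assms by (intro vec.span_minimal) auto
    then show "card (W - vec.span {u}) = CARD('a) ^ vec.dim W - CARD('a)"
      using card_subspace[OF assms] card_span1[of u] u by (simp add: card_Diff_subset)
  qed
  then have "card (Sig W) = (\<Sum>u\<in>W-{0}. CARD('a) ^ vec.dim W - CARD('a))"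
    unfolding Sig_def by (simp add: card_SigmaI)
  also have "\<dots> = card (W - {0}) * (CARD('a) ^ vec.dim W - CARD('a))" by simp
  also have "card (W - {0}) = CARD('a) ^ vec.dim W - 1"
    using card_subspace[OF assms] assms vec.subspace_0[OF assms] by (simp add: card_Diff_singleton)
  finally show ?thesis .
qed

lemma count_lines_in:
  fixes W :: "('a::{field,finite}^4) set"
  assumes "vec.subspace W"
  shows "card {L\<in>lines. L \<subseteq> W} * ((CARD('a)^2 - 1) * (CARD('a)^2 - CARD('a)))
       = (CARD('a) ^ vec.dim W - 1) * (CARD('a) ^ vec.dim W - CARD('a))"
proof -
  have "card (Sig W) = card {L\<in>lines. L \<subseteq> W} * ((CARD('a)^2 - 1) * (CARD('a)^2 - CARD('a)))"
  proof (rule double_count[where g = "\<lambda>p. vec.span {fst p, snd p}"])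
    show "finite (Sig W)" by simp
    show "finite {L\<in>lines. L \<subseteq> W}" by simp
    show "\<forall>p\<in>Sig W. vec.span {fst p, snd p} \<in> {L\<in>lines. L \<subseteq> W}"
    proof
      fix p assume "p \<in> Sig W"
      then obtain u v where p: "p = (u,v)" "u \<in> W" "u \<noteq> 0" "v \<in> W" "v \<notin> vec.span {u}"
        unfolding Sig_def by auto
      have "vec.span {u, v} \<subseteq> W" using p assms by (intro vec.span_minimal) auto
      then show "vec.span {fst p, snd p} \<in> {L\<in>lines. L \<subseteq> W}"
        using p pair_is_line[of u v] by auto
    qed
    show "\<forall>L\<in>{L\<in>lines. L \<subseteq> W}. card {p\<in>Sig W. vec.span {fst p, snd p} = L}
           = (CARD('a)^2 - 1) * (CARD('a)^2 - CARD('a))"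
    proof
      fix L assume L: "L \<in> {L\<in>lines. L \<subseteq> W}"
      have "{p\<in>Sig W. vec.span {fst p, snd p} = L} = Sig L"
      proof (intro equalityI subsetI)
        fix p assume "p \<in> {p\<in>Sig W. vec.span {fst p, snd p} = L}"
        then obtain u v where p: "p = (u,v)" "u \<noteq> 0" "v \<notin> vec.span {u}" "vec.span {u, v} = L"
          unfolding Sig_def by (cases p) auto
        then have "u \<in> L" "v \<in> L" using vec.span_base by blast+
        then show "p \<in> Sig L" using p unfolding Sig_def by auto
      next
        fix p assume "p \<in> Sig L"
        then obtain u v where p: "p = (u,v)" "u \<in> L" "u \<noteq> 0" "v \<in> L" "v \<notin> vec.span {u}"
          unfolding Sig_def by auto
        then show "p \<in> {p\<in>Sig W. vec.span {fst p, snd p} = L}"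
          using L pair_line[of u v L] unfolding Sig_def by auto
      qed
      then show "card {p\<in>Sig W. vec.span {fst p, snd p} = L}
           = (CARD('a)^2 - 1) * (CARD('a)^2 - CARD('a))"
        using card_Sig[of L] L by (simp add: mem_sod)
    qed
  qed
  then show ?thesis using card_Sig[OF assms] by simp
qed

definition Sigp :: "('a::{field,finite}^4) set \<Rightarrow> ('a^4) set \<Rightarrow> (('a^4) \<times> ('a^4)) set" where
  "Sigp Q W = (SIGMA u:(Q-{0}). W - Q)"

lemma card_Sigp:
  fixes W :: "('a::{field,finite}^4) set"
  assumes "vec.subspace W" "Q \<in> points" "Q \<subseteq> W"
  shows "card (Sigp Q W) = (CARD('a) - 1) * (CARD('a) ^ vec.dim W - CARD('a))"
proof -
  have cQ: "card Q = CARD('a)" using card_sod[OF assms(2)] by simp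
  have "0 \<in> Q" using assms(2) vec.subspace_0 by (auto simp: mem_sod)
  then have cQ0: "card (Q - {0}) = CARD('a) - 1" using cQ by (simp add: card_Diff_singleton)
  have "card (W - Q) = CARD('a) ^ vec.dim W - CARD('a)"
    using card_subspace[OF assms(1)] cQ assms(3) by (simp add: card_Diff_subset)
  then show ?thesis unfolding Sigp_def using cQ0 by (simp add: card_cartesian_product)
qed

lemma count_lines_through_in:
  fixes W :: "('a::{field,finite}^4) set"
  assumes "vec.subspace W" "Q \<in> points" "Q \<subseteq> W"
  shows "card {L\<in>lines. Q \<subseteq> L \<and> L \<subseteq> W} * ((CARD('a) - 1) * (CARD('a)^2 - CARD('a)))
       = (CARD('a) - 1) * (CARD('a) ^ vec.dim W - CARD('a))"
proof -
  have "card (Sigp Q W) = card {L\<in>lines. Q \<subseteq> L \<and> L \<subseteq> W} * ((CARD('a) - 1) * (CARD('a)^2 - CARD('a)))"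
  proof (rule double_count[where g = "\<lambda>p. vec.span {fst p, snd p}"])
    show "finite (Sigp Q W)" by simp
    show "finite {L\<in>lines. Q \<subseteq> L \<and> L \<subseteq> W}" by simp
    show "\<forall>p\<in>Sigp Q W. vec.span {fst p, snd p} \<in> {L\<in>lines. Q \<subseteq> L \<and> L \<subseteq> W}"
    proof
      fix p assume "p \<in> Sigp Q W"
      then obtain u v where p: "p = (u,v)" "u \<in> Q" "u \<noteq> 0" "v \<in> W" "v \<notin> Q"
        unfolding Sigp_def by auto
      have Qs: "vec.span {u} = Q" using point_span[OF assms(2) p(2,3)] .
      have "vec.span {u, v} \<subseteq> W" using p assms by (intro vec.span_minimal) auto
      moreover have "Q \<subseteq> vec.span {u, v}" unfolding Qs[symmetric] by (rule vec.span_mono) auto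
      ultimately show "vec.span {fst p, snd p} \<in> {L\<in>lines. Q \<subseteq> L \<and> L \<subseteq> W}"
        using p pair_is_line[of u v] Qs by auto
    qed
    show "\<forall>L\<in>{L\<in>lines. Q \<subseteq> L \<and> L \<subseteq> W}. card {p\<in>Sigp Q W. vec.span {fst p, snd p} = L}
           = (CARD('a) - 1) * (CARD('a)^2 - CARD('a))"
    proof
      fix L assume L: "L \<in> {L\<in>lines. Q \<subseteq> L \<and> L \<subseteq> W}"
      have "{p\<in>Sigp Q W. vec.span {fst p, snd p} = L} = Sigp Q L"
      proof (intro equalityI subsetI)
        fix p assume "p \<in> {p\<in>Sigp Q W. vec.span {fst p, snd p} = L}"
        then obtain u v where p: "p = (u,v)" "u \<in> Q" "u \<noteq> 0" "v \<notin> Q" "vec.span {u, v} = L"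
          unfolding Sigp_def by (cases p) auto
        then have "v \<in> L" using vec.span_base by blast
        then show "p \<in> Sigp Q L" using p unfolding Sigp_def by auto
      next
        fix p assume "p \<in> Sigp Q L"
        then obtain u v where p: "p = (u,v)" "u \<in> Q" "u \<noteq> 0" "v \<in> L" "v \<notin> Q"
          unfolding Sigp_def by auto
        have Qs: "vec.span {u} = Q" using point_span[OF assms(2) p(2,3)] .
        then show "p \<in> {p\<in>Sigp Q W. vec.span {fst p, snd p} = L}"
          using L p pair_line[of u v L] unfolding Sigp_def by auto
      qed
      then show "card {p\<in>Sigp Q W. vec.span {fst p, snd p} = L}
           = (CARD('a) - 1) * (CARD('a)^2 - CARD('a))"
        using card_Sigp[of L Q] L assms(2) by (simp add: mem_sod)
    qed
  qed
  then show ?thesis using card_Sigp[OF assms] by metis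
qed

lemma distinct_points_key:
  fixes P Q :: "('a::{field,finite}^4) set"
  assumes "P \<in> points" "Q \<in> points" "P \<noteq> Q" "u \<in> P - {0}" "v \<in> Q - {0}"
  shows "v \<notin> vec.span {u}"
proof
  assume "v \<in> vec.span {u}"
  then have "v \<in> P" using point_span[OF assms(1), of u] assms by auto
  then have "P = Q" using point_span[OF assms(1), of v] point_span[OF assms(2), of v] assms by auto
  with assms(3) show False by simp
qed

lemma count_lines_two_points:
  fixes P Q :: "('a::{field,finite}^4) set"
  assumes "P \<in> points" "Q \<in> points" "P \<noteq> Q"
  shows "card {L\<in>lines. P \<subseteq> L \<and> Q \<subseteq> L} = 1"
proof -
  let ?PP = "(P - {0}) \<times> (Q - {0})"
  have key: "\<And>u v. u \<in> P - {0} \<Longrightarrow> v \<in> Q - {0} \<Longrightarrow> v \<notin> vec.span {u}"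
  proof
    fix u v assume u: "u \<in> P - {0}" and v: "v \<in> Q - {0}" and "v \<in> vec.span {u}"
    then have "v \<in> P" using point_span[OF assms(1), of u] by auto
    then have "P = Q" using point_span[OF assms(1), of v] point_span[OF assms(2), of v] v by auto
    with assms(3) show False by simp
  qed
  have "0 \<in> P" "0 \<in> Q" using assms(1,2) vec.subspace_0 by (auto simp: mem_sod)
  then have cP: "card (P - {0}) = CARD('a) - 1" "card (Q - {0}) = CARD('a) - 1"
    using card_sod[OF assms(1)] card_sod[OF assms(2)]
    by (auto simp: card_Diff_singleton)
  have "card ?PP = card {L\<in>lines. P \<subseteq> L \<and> Q \<subseteq> L} * card ?PP"
  proof (rule double_count[where g = "\<lambda>p. vec.span {fst p, snd p}"])
    show "finite ?PP" by simp
    show "finite {L\<in>lines. P \<subseteq> L \<and> Q \<subseteq> L}" by simp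
    show "\<forall>p\<in>?PP. vec.span {fst p, snd p} \<in> {L\<in>lines. P \<subseteq> L \<and> Q \<subseteq> L}"
    proof
      fix p assume "p \<in> ?PP"
      then obtain u v where p: "p = (u,v)" "u \<in> P - {0}" "v \<in> Q - {0}" by auto
      have "vec.span {u} = P" "vec.span {v} = Q"
        using point_span[OF assms(1), of u] point_span[OF assms(2), of v] p by auto
      then have "P \<subseteq> vec.span {u, v}" "Q \<subseteq> vec.span {u, v}"
        using vec.span_mono[of "{u}" "{u,v}"] vec.span_mono[of "{v}" "{u,v}"] by auto
      then show "vec.span {fst p, snd p} \<in> {L\<in>lines. P \<subseteq> L \<and> Q \<subseteq> L}"
        using p pair_is_line[of u v] key[of u v] by auto
    qed
    show "\<forall>L\<in>{L\<in>lines. P \<subseteq> L \<and> Q \<subseteq> L}. card {p\<in>?PP. vec.span {fst p, snd p} = L} = card ?PP"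
    proof
      fix L assume L: "L \<in> {L\<in>lines. P \<subseteq> L \<and> Q \<subseteq> L}"
      have "{p\<in>?PP. vec.span {fst p, snd p} = L} = ?PP"
      proof (intro equalityI subsetI)
        fix p assume "p \<in> ?PP"
        then obtain u v where p: "p = (u,v)" "u \<in> P - {0}" "v \<in> Q - {0}" by auto
        have "vec.span {u, v} = L"
          using pair_line[of u v L] key[OF p(2,3)] p L by auto
        then show "p \<in> {p\<in>?PP. vec.span {fst p, snd p} = L}" using p by auto
      qed auto
      then show "card {p\<in>?PP. vec.span {fst p, snd p} = L} = card ?PP" by simp
    qed
  qed
  moreover have "card ?PP \<noteq> 0" using cP card_ge2[where 'a='a] by (simp add: card_cartesian_product)
  ultimately show ?thesis by simp
qed

lemma rdiff1: "n \<ge> 1 \<Longrightarrow> real (CARD('a::{field,finite})^n - CARD('a)) = real CARD('a)^n - real CARD('a)"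
proof -
  assume n: "n \<ge> 1"
  have "CARD('a) \<le> CARD('a)^n" using n card_ge2[where 'a='a]
    by (metis One_nat_def le_add2 plus_1_eq_Suc power_one_right power_increasing not_one_le_zero
        le_trans one_le_numeral)
  then show ?thesis by (simp add: of_nat_diff)
qed

lemma rdiff2: "real (CARD('a::{field,finite})^n - 1) = real CARD('a)^n - 1"
proof -
  have "1 \<le> CARD('a)^n" using card_ge2[where 'a='a] by simp
  then show ?thesis by (simp add: of_nat_diff)
qed

lemma rdiff3: "real (CARD('a::{field,finite}) - 1) = real CARD('a) - 1"
  using card_ge2[where 'a='a] by (simp add: of_nat_diff)

lemma rq2: "real CARD('a::{field,finite}) \<ge> 2"
  using card_ge2[where 'a='a] by simp

lemma dimU: "vec.dim (UNIV :: ('a::{field,finite}^4) set) = 4"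
  using vec_dim_card[where 'a='a and 'n=4] by (simp del: vec.dim_UNIV)

lemma R_through:
  fixes Q :: "('a::{field,finite}^4) set"
  assumes "Q \<in> points"
  shows "real (card {L\<in>lines. Q \<subseteq> L}) = real CARD('a)^2 + real CARD('a) + 1"
proof -
  let ?q = "real CARD('a)"
  have e: "card {L\<in>lines. Q \<subseteq> L} * ((CARD('a) - 1) * (CARD('a)^2 - CARD('a)))
       = (CARD('a) - 1) * (CARD('a) ^ 4 - CARD('a))"
    using count_lines_through_in[of UNIV Q] assms dimU[where 'a='a] by simp
  have "real (card {L\<in>lines. Q \<subseteq> L}) * ((?q - 1) * (?q^2 - ?q)) = (?q - 1) * (?q^4 - ?q)"
    using arg_cong[OF e, of real] by (simp only: of_nat_mult rdiff1 rdiff3)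
  also have "\<dots> = (?q^2 + ?q + 1) * ((?q - 1) * (?q^2 - ?q))" by algebra
  finally have "real (card {L\<in>lines. Q \<subseteq> L}) * ((?q - 1) * (?q^2 - ?q)) = (?q^2 + ?q + 1) * ((?q - 1) * (?q^2 - ?q))" .
  moreover have "(?q - 1) * (?q^2 - ?q) \<noteq> 0" using rq2[where 'a='a]
    by (simp add: power2_eq_square)
  ultimately show ?thesis by simp
qed
lemma nz2: "(real CARD('a::{field,finite})^2 - 1) * (real CARD('a)^2 - real CARD('a)) \<noteq> 0"
proof -
  let ?q = "real CARD('a)"
  have h: "?q * ?q \<ge> 2 * ?q" using rq2[where 'a='a] by (intro mult_right_mono) auto
  then have "?q * ?q \<noteq> 1" "?q * ?q \<noteq> ?q" using rq2[where 'a='a] by linarith+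
  then show ?thesis by (simp add: power2_eq_square)
qed

lemma R_in:
  fixes H :: "('a::{field,finite}^4) set"
  assumes "H \<in> planes"
  shows "real (card {L\<in>lines. L \<subseteq> H}) = real CARD('a)^2 + real CARD('a) + 1"
proof -
  let ?q = "real CARD('a)"
  have e: "card {L\<in>lines. L \<subseteq> H} * ((CARD('a)^2 - 1) * (CARD('a)^2 - CARD('a)))
       = (CARD('a) ^ 3 - 1) * (CARD('a) ^ 3 - CARD('a))"
    using count_lines_in[of H] assms by (simp add: mem_sod)
  have "real (card {L\<in>lines. L \<subseteq> H}) * ((?q^2 - 1) * (?q^2 - ?q)) = (?q^3 - 1) * (?q^3 - ?q)"
    using arg_cong[OF e, of real] by (simp only: of_nat_mult rdiff1 rdiff2)
  also have "\<dots> = (?q^2 + ?q + 1) * ((?q^2 - 1) * (?q^2 - ?q))" by algebra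
  finally have "real (card {L\<in>lines. L \<subseteq> H}) * ((?q^2 - 1) * (?q^2 - ?q)) = (?q^2 + ?q + 1) * ((?q^2 - 1) * (?q^2 - ?q))" .
  then show ?thesis using nz2[where 'a='a] by simp
qed

lemma R_all:
  shows "real (card (lines :: ('a::{field,finite}^4) set set)) = (real CARD('a)^2 + 1) * (real CARD('a)^2 + real CARD('a) + 1)"
proof -
  let ?q = "real CARD('a)"
  have e: "card (lines :: ('a^4) set set) * ((CARD('a)^2 - 1) * (CARD('a)^2 - CARD('a)))
       = (CARD('a) ^ 4 - 1) * (CARD('a) ^ 4 - CARD('a))"
    using count_lines_in[of "UNIV :: ('a^4) set"] dimU[where 'a='a] by simp
  have "real (card (lines :: ('a^4) set set)) * ((?q^2 - 1) * (?q^2 - ?q)) = (?q^4 - 1) * (?q^4 - ?q)"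
    using arg_cong[OF e, of real] by (simp only: of_nat_mult rdiff1 rdiff2)
  also have "\<dots> = (?q^2 + 1) * (?q^2 + ?q + 1) * ((?q^2 - 1) * (?q^2 - ?q))" by algebra
  finally have "real (card (lines :: ('a^4) set set)) * ((?q^2 - 1) * (?q^2 - ?q)) = (?q^2 + 1) * (?q^2 + ?q + 1) * ((?q^2 - 1) * (?q^2 - ?q))" .
  then show ?thesis using nz2[where 'a='a] by simp
qed

lemma R_through_in:
  fixes Q H :: "('a::{field,finite}^4) set"
  assumes "Q \<in> points" "H \<in> planes" "Q \<subseteq> H"
  shows "real (card {L\<in>lines. Q \<subseteq> L \<and> L \<subseteq> H}) = real CARD('a) + 1"
proof -
  let ?q = "real CARD('a)"
  have e: "card {L\<in>lines. Q \<subseteq> L \<and> L \<subseteq> H} * ((CARD('a) - 1) * (CARD('a)^2 - CARD('a)))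
       = (CARD('a) - 1) * (CARD('a) ^ 3 - CARD('a))"
    using count_lines_through_in[of H Q] assms by (simp add: mem_sod)
  have "real (card {L\<in>lines. Q \<subseteq> L \<and> L \<subseteq> H}) * ((?q - 1) * (?q^2 - ?q)) = (?q - 1) * (?q^3 - ?q)"
    using arg_cong[OF e, of real] by (simp only: of_nat_mult rdiff1 rdiff3)
  also have "\<dots> = (?q + 1) * ((?q - 1) * (?q^2 - ?q))" by algebra
  finally have "real (card {L\<in>lines. Q \<subseteq> L \<and> L \<subseteq> H}) * ((?q - 1) * (?q^2 - ?q)) = (?q + 1) * ((?q - 1) * (?q^2 - ?q))" .
  moreover have "(?q - 1) * (?q^2 - ?q) \<noteq> 0" using rq2[where 'a='a]
    by (simp add: power2_eq_square)
  ultimately show ?thesis by simp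
qed

lemma sum_if_card: "finite S \<Longrightarrow> (\<Sum>x\<in>S. if P x then (1::real) else 0) = real (card {x\<in>S. P x})"
  by (simp add: sum.inter_filter[symmetric])

lemma point_nonzero:
  fixes P :: "('a::{field,finite}^4) set"
  assumes "P \<in> points" obtains u where "u \<in> P" "u \<noteq> 0"
proof -
  have "\<exists>u\<in>P. u \<noteq> 0"
  proof (rule ccontr)
    assume "\<not> ?thesis"
    then have "P \<subseteq> {0}" by auto
    then have "card P \<le> 1" using card_mono[of "{0}" P] by simp
    then show False using card_sod[OF assms] card_ge2[where 'a='a] by simp
  qed
  then show ?thesis using that by blast
qed

lemma line_through_two_in_plane:
  fixes P Q H L :: "('a::{field,finite}^4) set"
  assumes "P \<in> points" "Q \<in> points" "P \<noteq> Q" "H \<in> planes" "P \<subseteq> H" "Q \<subseteq> H"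
    "L \<in> lines" "P \<subseteq> L" "Q \<subseteq> L"
  shows "L \<subseteq> H"
proof -
  obtain u where u: "u \<in> P" "u \<noteq> 0" using point_nonzero[OF assms(1)] by blast
  obtain v where v: "v \<in> Q" "v \<noteq> 0" using point_nonzero[OF assms(2)] by blast
  have k: "v \<notin> vec.span {u}" using distinct_points_key[OF assms(1-3), of u v] u v by auto
  have "vec.span {u, v} = L" using pair_line[OF u(2) k assms(7)] u v assms(8,9) by auto
  moreover have "vec.span {u, v} \<subseteq> H" using u v assms(4-6)
    by (intro vec.span_minimal) (auto simp: mem_sod)
  ultimately show ?thesis by simp
qed

lemma per_Q:
  fixes P Q H :: "('a::{field,finite}^4) set"
  assumes "P \<in> points" "H \<in> planes" "P \<subseteq> H" "Q \<in> points"
  shows "real (card {L\<in>lines. P \<subseteq> L \<and> Q \<subseteq> L}) + real (card {L\<in>lines. L \<subseteq> H \<and> Q \<subseteq> L})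
     - (real CARD('a) + 1) * real (card {L\<in>lines. (P \<subseteq> L \<and> L \<subseteq> H) \<and> Q \<subseteq> L}) = 1"
proof -
  let ?q = "real CARD('a)"
  consider "Q = P" | "Q \<noteq> P" "Q \<subseteq> H" | "\<not> Q \<subseteq> H" using assms(3) by blast
  then show ?thesis
  proof cases
    case 1
    have "{L\<in>lines. P \<subseteq> L \<and> Q \<subseteq> L} = {L\<in>lines. P \<subseteq> L}"
      "{L\<in>lines. L \<subseteq> H \<and> Q \<subseteq> L} = {L\<in>lines. P \<subseteq> L \<and> L \<subseteq> H}"
      "{L\<in>lines. (P \<subseteq> L \<and> L \<subseteq> H) \<and> Q \<subseteq> L} = {L\<in>lines. P \<subseteq> L \<and> L \<subseteq> H}"
      using 1 by auto
    then show ?thesis using R_through[OF assms(1)] R_through_in[OF assms(1-3)]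
      by (simp add: power2_eq_square algebra_simps)
  next
    case 2
    have a: "real (card {L\<in>lines. P \<subseteq> L \<and> Q \<subseteq> L}) = 1"
      using count_lines_two_points[OF assms(1,4)] 2 by auto
    have "{L\<in>lines. (P \<subseteq> L \<and> L \<subseteq> H) \<and> Q \<subseteq> L} = {L\<in>lines. P \<subseteq> L \<and> Q \<subseteq> L}"
      using line_through_two_in_plane[OF assms(1,4) _ assms(2,3) 2(2)] 2(1) by blast
    then have c: "real (card {L\<in>lines. (P \<subseteq> L \<and> L \<subseteq> H) \<and> Q \<subseteq> L}) = 1" using a by simp
    have "{L\<in>lines. L \<subseteq> H \<and> Q \<subseteq> L} = {L\<in>lines. Q \<subseteq> L \<and> L \<subseteq> H}" by auto
    then have b: "real (card {L\<in>lines. L \<subseteq> H \<and> Q \<subseteq> L}) = ?q + 1"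
      using R_through_in[OF assms(4,2) 2(2)] by simp
    show ?thesis by (simp only: a b c) simp
  next
    case 3
    then have "Q \<noteq> P" using assms(3) by auto
    then have a: "real (card {L\<in>lines. P \<subseteq> L \<and> Q \<subseteq> L}) = 1"
      using count_lines_two_points[OF assms(1,4)] by auto
    have "{L\<in>lines. L \<subseteq> H \<and> Q \<subseteq> L} = {}" "{L\<in>lines. (P \<subseteq> L \<and> L \<subseteq> H) \<and> Q \<subseteq> L} = {}"
      using 3 by auto
    then have b: "real (card {L\<in>lines. L \<subseteq> H \<and> Q \<subseteq> L}) = 0"
      and c: "real (card {L\<in>lines. (P \<subseteq> L \<and> L \<subseteq> H) \<and> Q \<subseteq> L}) = 0" by simp_all
    show ?thesis by (simp only: a b c)
  qed
qed

lemma count_decomp: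
  fixes Y :: "(('a::{field,finite})^4) set set"
  assumes Y: "Y \<subseteq> lines"
    and f: "\<forall>L \<in> lines. char_fun Y L = c + (\<Sum>Q\<in>points. cP Q * xP Q L)"
  shows "real (card {L\<in>Y. R L}) = c * real (card {L\<in>lines. R L})
          + (\<Sum>Q\<in>points. cP Q * real (card {L\<in>lines. R L \<and> Q \<subseteq> L}))"
proof -
  let ?S = "{L\<in>lines. R L}"
  have "{L\<in>?S. L \<in> Y} = {L\<in>Y. R L}" using Y by auto
  then have "real (card {L\<in>Y. R L}) = (\<Sum>L\<in>?S. char_fun Y L)"
    using sum_if_card[of ?S "\<lambda>L. L \<in> Y"] by (simp add: char_fun_def)
  also have "\<dots> = (\<Sum>L\<in>?S. c + (\<Sum>Q\<in>points. cP Q * xP Q L))"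
    using f by (intro sum.cong) auto
  also have "\<dots> = c * real (card ?S) + (\<Sum>Q\<in>points. \<Sum>L\<in>?S. cP Q * xP Q L)"
    by (simp add: sum.distrib sum.swap[of _ ?S])
  also have "(\<Sum>Q\<in>points. \<Sum>L\<in>?S. cP Q * xP Q L)
      = (\<Sum>Q\<in>points. cP Q * real (card {L\<in>lines. R L \<and> Q \<subseteq> L}))"
  proof (intro sum.cong refl)
    fix Q
    have "(\<Sum>L\<in>?S. cP Q * xP Q L) = cP Q * (\<Sum>L\<in>?S. if Q \<subseteq> L then 1 else 0)"
      by (simp add: sum_distrib_left xP_def)
    also have "\<dots> = cP Q * real (card {L\<in>?S. Q \<subseteq> L})" by (simp add: sum_if_card)
    also have "{L\<in>?S. Q \<subseteq> L} = {L\<in>lines. R L \<and> Q \<subseteq> L}" by auto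
    finally show "(\<Sum>L\<in>?S. cP Q * xP Q L) = cP Q * real (card {L\<in>lines. R L \<and> Q \<subseteq> L})" .
  qed
  finally show ?thesis .
qed

theorem mainTheorem2:
  fixes Y :: "(('a::{field,finite})^4) set set" and x :: real
  assumes "Y \<subseteq> lines"
    and "degree_le_1 (char_fun Y)"
    and "real (card Y) = x * (real CARD('a)^2 + real CARD('a) + 1)"
  shows "\<forall>P H. P \<in> points \<and> H \<in> planes \<and> P \<subseteq> H \<longrightarrow>
           x = real (card {L \<in> Y. P \<subseteq> L}) + real (card {L \<in> Y. L \<subseteq> H})
               - (real CARD('a) + 1) * real (card {L \<in> Y. P \<subseteq> L \<and> L \<subseteq> H})"
proof (intro allI impI)
  fix P H :: "('a^4) set"
  assume PH: "P \<in> points \<and> H \<in> planes \<and> P \<subseteq> H"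
  let ?q = "real CARD('a)"
  obtain c cP where f: "\<forall>L \<in> lines. char_fun Y L = c + (\<Sum>Q\<in>points. cP Q * xP Q L)"
    using assms(2) unfolding degree_le_1_def by blast
  note D = count_decomp[OF assms(1) f]
  define S0 where "S0 = (\<Sum>Q\<in>points. cP Q)"
  have "real (card Y) = c * real (card (lines :: ('a^4) set set))
          + (\<Sum>Q\<in>(points :: ('a^4) set set). cP Q * real (card {L\<in>lines. Q \<subseteq> L}))"
    using D[of "\<lambda>_. True"] by simp
  also have "(\<Sum>Q\<in>(points :: ('a^4) set set). cP Q * real (card {L\<in>lines. Q \<subseteq> L}))
       = (\<Sum>Q\<in>(points :: ('a^4) set set). cP Q * (?q^2 + ?q + 1))"
    by (intro sum.cong refl) (simp add: R_through)
  finally have "real (card Y) = c * ((?q^2+1) * (?q^2 + ?q + 1)) + S0 * (?q^2 + ?q + 1)"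
    by (simp add: R_all S0_def sum_distrib_right)
  then have "x * (?q^2 + ?q + 1) = (c * (?q^2+1) + S0) * (?q^2 + ?q + 1)"
    using assms(3) by (simp add: algebra_simps)
  moreover have "?q^2 + ?q + 1 \<noteq> 0" using rq2[where 'a='a] by (smt (verit) zero_le_power2)
  ultimately have x: "x = c * (?q^2+1) + S0" by simp
  have A: "real (card {L\<in>Y. P \<subseteq> L}) = c * (?q^2 + ?q + 1)
       + (\<Sum>Q\<in>points. cP Q * real (card {L\<in>lines. P \<subseteq> L \<and> Q \<subseteq> L}))"
    using D[of "\<lambda>L. P \<subseteq> L"] R_through[of P] PH by simp
  have B: "real (card {L\<in>Y. L \<subseteq> H}) = c * (?q^2 + ?q + 1)
       + (\<Sum>Q\<in>points. cP Q * real (card {L\<in>lines. L \<subseteq> H \<and> Q \<subseteq> L}))"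
    using D[of "\<lambda>L. L \<subseteq> H"] R_in[of H] PH by simp
  have C: "real (card {L\<in>Y. P \<subseteq> L \<and> L \<subseteq> H}) = c * (?q + 1)
       + (\<Sum>Q\<in>points. cP Q * real (card {L\<in>lines. (P \<subseteq> L \<and> L \<subseteq> H) \<and> Q \<subseteq> L}))"
    using D[of "\<lambda>L. P \<subseteq> L \<and> L \<subseteq> H"] R_through_in[of P H] PH by simp
  have "real (card {L\<in>Y. P \<subseteq> L}) + real (card {L\<in>Y. L \<subseteq> H})
        - (?q + 1) * real (card {L\<in>Y. P \<subseteq> L \<and> L \<subseteq> H})
      = c * (2 * (?q^2 + ?q + 1) - (?q + 1) * (?q + 1))
        + (\<Sum>Q\<in>points. cP Q * (real (card {L\<in>lines. P \<subseteq> L \<and> Q \<subseteq> L})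
             + real (card {L\<in>lines. L \<subseteq> H \<and> Q \<subseteq> L})
             - (?q + 1) * real (card {L\<in>lines. (P \<subseteq> L \<and> L \<subseteq> H) \<and> Q \<subseteq> L})))"
    unfolding A B C by (simp add: algebra_simps sum.distrib sum_subtractf sum_distrib_left)
  also have "\<dots> = c * (?q^2 + 1) + S0"
    unfolding S0_def using per_Q[of P H] PH by (simp add: power2_eq_square algebra_simps)
  finally show "x = real (card {L\<in>Y. P \<subseteq> L}) + real (card {L\<in>Y. L \<subseteq> H})
        - (?q + 1) * real (card {L\<in>Y. P \<subseteq> L \<and> L \<subseteq> H})" using x by simp
qed

end
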